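(* Consider the following two-player game. Each player $i \in \{1,2\}$ privately knows her type $\theta_i$, her valuation of an indivisible object; types are drawn independently from a common absolutely continuous distribution $F$ with support $\Theta = (\underline{\theta}, \overline{\theta})$, $0 \le \underline{\theta} < \overline{\theta} \le \infty$, whose density $f$ is continuous and strictly positive on $(\underline{\theta}, \overline{\theta})$. Each player simultaneously chooses a stopping time $a_i \in [0,\infty]$; a (pure) strategy is a function $\sigma_i : \Theta \to [0,\infty]$. Payoffs are $u_i(a_i,a_{-i},\theta_i) = \theta_i - a_{-i}$ if $a_i > a_{-i}$, $\theta_i/2 - a_i$ if $a_i = a_{-i}$, and $-a_i$ if $a_i < a_{-i}$. Let $(\sigma_1,\sigma_2)$ be a Bayesian Nash equilibrium, and for $i\in\{1,2\}$ let $\overline{\theta}_i := \inf\{\theta \in \Theta : \sigma_i(\theta) = \infty\}$ (the lowest type of player $i$ that fights forever). Then at most one player has a positive mass of types choosing $\infty$, in the sense that $\max\{\overline{\theta}_1, \overline{\theta}_2\} = \overline{\theta}$.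
   Context: Equilibrium concept: Bayesian Nash equilibrium in pure strategies, each type maximizing expected payoff given the opponent's strategy and the prior $F$. The infimum of the empty set is taken to be $\overline{\theta}$. *)

theory Defs
  imports "HOL-Analysis.Analysis"
begin

definition typeset :: "real \<Rightarrow> ereal \<Rightarrow> real set" where
  "typeset lo hi = {\<theta>. lo < \<theta> \<and> ereal \<theta> < hi}"

definition prior :: "(real \<Rightarrow> real) \<Rightarrow> real \<Rightarrow> ereal \<Rightarrow> real measure" where
  "prior f lo hi = density lborel (\<lambda>x. ennreal (f x) * indicator (typeset lo hi) x)"

definition payoff :: "ereal \<Rightarrow> ereal \<Rightarrow> real \<Rightarrow> ereal" where
  "payoff a b \<theta> =
     (if b < a then ereal \<theta> - b
      else if a = b then ereal (\<theta> / 2) - a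
      else - a)"

text \<open>Expected payoff of a type \<theta> choosing action a when the opponent uses strategy \<sigma>
  and the opponent's type is drawn from M (positive part minus negative part; the
  positive part is always finite, the value may be -\<infinity>).\<close>
definition exp_payoff :: "real measure \<Rightarrow> (real \<Rightarrow> ereal) \<Rightarrow> ereal \<Rightarrow> real \<Rightarrow> ereal" where
  "exp_payoff M \<sigma> a \<theta> =
     enn2ereal (\<integral>\<^sup>+ x. e2ennreal (payoff a (\<sigma> x) \<theta>) \<partial>M)
     - enn2ereal (\<integral>\<^sup>+ x. e2ennreal (- payoff a (\<sigma> x) \<theta>) \<partial>M)"

definition best_response :: "real measure \<Rightarrow> real set \<Rightarrow> (real \<Rightarrow> ereal) \<Rightarrow> (real \<Rightarrow> ereal) \<Rightarrow> bool" where
  "best_response M \<Theta> \<sigma> \<tau> \<longleftrightarrow>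
     (\<forall>\<theta>\<in>\<Theta>. \<forall>a::ereal. 0 \<le> a \<longrightarrow> exp_payoff M \<tau> a \<theta> \<le> exp_payoff M \<tau> (\<sigma> \<theta>) \<theta>)"

definition strategy :: "real set \<Rightarrow> (real \<Rightarrow> ereal) \<Rightarrow> bool" where
  "strategy \<Theta> \<sigma> \<longleftrightarrow> (\<forall>\<theta>\<in>\<Theta>. 0 \<le> \<sigma> \<theta>) \<and> \<sigma> \<in> borel_measurable borel"

definition bayes_nash :: "(real \<Rightarrow> real) \<Rightarrow> real \<Rightarrow> ereal \<Rightarrow> (real \<Rightarrow> ereal) \<Rightarrow> (real \<Rightarrow> ereal) \<Rightarrow> bool" where
  "bayes_nash f lo hi \<sigma>1 \<sigma>2 \<longleftrightarrow>
     strategy (typeset lo hi) \<sigma>1 \<and> strategy (typeset lo hi) \<sigma>2 \<and>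
     best_response (prior f lo hi) (typeset lo hi) \<sigma>1 \<sigma>2 \<and>
     best_response (prior f lo hi) (typeset lo hi) \<sigma>2 \<sigma>1"

definition stop_thresh :: "real \<Rightarrow> ereal \<Rightarrow> (real \<Rightarrow> ereal) \<Rightarrow> ereal" where
  "stop_thresh lo hi \<sigma> =
     (if {\<theta>\<in>typeset lo hi. \<sigma> \<theta> = \<infinity>} = {} then hi
      else Inf (ereal ` {\<theta>\<in>typeset lo hi. \<sigma> \<theta> = \<infinity>}))"

end

theory Submission
  imports Defs "HOL-Probability.Probability_Measure"
begin

lemma ev_real:
  fixes g :: "real \<Rightarrow> ereal"
  assumes "AE x in M. g x = ereal (h x)" "integrable M h"
  shows "enn2ereal (\<integral>\<^sup>+x. e2ennreal (g x) \<partial>M) - enn2ereal (\<integral>\<^sup>+x. e2ennreal (- g x) \<partial>M)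
         = ereal (integral\<^sup>L M h)"
proof -
  have 1: "(\<integral>\<^sup>+x. e2ennreal (g x) \<partial>M) = (\<integral>\<^sup>+x. ennreal (h x) \<partial>M)"
    using assms(1) by (intro nn_integral_cong_AE) (auto simp: e2ennreal_ereal)
  have 2: "(\<integral>\<^sup>+x. e2ennreal (- g x) \<partial>M) = (\<integral>\<^sup>+x. ennreal (- h x) \<partial>M)"
    using assms(1) by (intro nn_integral_cong_AE) (auto simp: e2ennreal_ereal)
  have f1: "(\<integral>\<^sup>+x. ennreal (h x) \<partial>M) \<noteq> \<infinity>"
  proof -
    have "(\<integral>\<^sup>+x. ennreal (h x) \<partial>M) \<le> (\<integral>\<^sup>+x. ennreal (norm (h x)) \<partial>M)"
      by (intro nn_integral_mono) (auto intro: ennreal_leI)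
    also have "\<dots> < \<infinity>" using assms(2) by (simp add: integrable_iff_bounded)
    finally show ?thesis by simp
  qed
  have f2: "(\<integral>\<^sup>+x. ennreal (- h x) \<partial>M) \<noteq> \<infinity>"
  proof -
    have "(\<integral>\<^sup>+x. ennreal (- h x) \<partial>M) \<le> (\<integral>\<^sup>+x. ennreal (norm (h x)) \<partial>M)"
      by (intro nn_integral_mono) (auto intro: ennreal_leI)
    also have "\<dots> < \<infinity>" using assms(2) by (simp add: integrable_iff_bounded)
    finally show ?thesis by simp
  qed
  have e: "enn2ereal P = ereal (enn2real P)" if hP: "P \<noteq> \<infinity>" for P
  proof -
    obtain r where "0 \<le> r" "P = ennreal r" by (cases P rule: ennreal_cases) (use hP in auto)
    then show ?thesis by (simp add: enn2ereal_ennreal)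
  qed
  show ?thesis unfolding 1 2 using f1 f2 assms(2)
    by (simp add: e real_lebesgue_integral_def)
qed

lemma ev_fin:
  fixes g :: "real \<Rightarrow> ereal"
  assumes meas: "g \<in> borel_measurable M"
    and P: "(\<integral>\<^sup>+x. e2ennreal (g x) \<partial>M) \<noteq> \<infinity>"
    and E: "enn2ereal (\<integral>\<^sup>+x. e2ennreal (g x) \<partial>M) - enn2ereal (\<integral>\<^sup>+x. e2ennreal (- g x) \<partial>M) \<noteq> -\<infinity>"
  shows "AE x in M. g x \<noteq> \<infinity> \<and> g x \<noteq> -\<infinity>"
    and "integrable M (\<lambda>x. real_of_ereal (g x))"
proof -
  have N: "(\<integral>\<^sup>+x. e2ennreal (- g x) \<partial>M) \<noteq> \<infinity>"
  proof
    assume "(\<integral>\<^sup>+x. e2ennreal (- g x) \<partial>M) = \<infinity>"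
    moreover obtain r where "0 \<le> r" "(\<integral>\<^sup>+x. e2ennreal (g x) \<partial>M) = ennreal r"
      using P by (cases "(\<integral>\<^sup>+x. e2ennreal (g x) \<partial>M)" rule: ennreal_cases) auto
    ultimately show False using E by (simp add: enn2ereal_ennreal)
  qed
  have a1: "AE x in M. e2ennreal (g x) \<noteq> \<infinity>"
    using P meas by (intro nn_integral_PInf_AE) auto
  have a2: "AE x in M. e2ennreal (- g x) \<noteq> \<infinity>"
    using N meas by (intro nn_integral_PInf_AE) auto
  show fin: "AE x in M. g x \<noteq> \<infinity> \<and> g x \<noteq> -\<infinity>"
    using a1 a2 by eventually_elim auto
  have "(\<integral>\<^sup>+ x. ennreal (norm (real_of_ereal (g x))) \<partial>M)
        = (\<integral>\<^sup>+x. e2ennreal (g x) + e2ennreal (- g x) \<partial>M)"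
  proof (intro nn_integral_cong_AE)
    show "AE x in M. ennreal (norm (real_of_ereal (g x))) = e2ennreal (g x) + e2ennreal (- g x)"
      using fin
    proof eventually_elim
      case (elim x)
      then obtain r where "g x = ereal r" by (cases "g x") auto
      then show ?case by (simp add: e2ennreal_ereal abs_real_def ennreal_neg)
    qed
  qed
  also have "\<dots> = (\<integral>\<^sup>+x. e2ennreal (g x) \<partial>M) + (\<integral>\<^sup>+x. e2ennreal (- g x) \<partial>M)"
    using meas by (intro nn_integral_add) auto
  also have "\<dots> < \<infinity>" using P N by (simp add: less_top)
  finally show "integrable M (\<lambda>x. real_of_ereal (g x))"
    using meas by (intro integrableI_bounded) auto
qed


definition pr :: "real \<Rightarrow> ereal \<Rightarrow> real \<Rightarrow> real" where
  "pr a b \<theta> = (if b < ereal a then \<theta> - real_of_ereal b else if b = ereal a then \<theta>/2 - a else - a)"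

lemma payoff_fin: "0 \<le> b \<Longrightarrow> payoff (ereal a) b \<theta> = ereal (pr a b \<theta>)"
  unfolding payoff_def pr_def by (cases b) auto

lemma payoff_inf: "b \<noteq> \<infinity> \<Longrightarrow> 0 \<le> b \<Longrightarrow> payoff \<infinity> b \<theta> = ereal (\<theta> - real_of_ereal b)"
  unfolding payoff_def by (cases b) auto

lemma payoff_inf_inf: "payoff \<infinity> \<infinity> \<theta> = - \<infinity>"
  unfolding payoff_def by simp

lemma payoff_meas: assumes [measurable]: "\<tau> \<in> borel_measurable M" shows "(\<lambda>x. payoff a (\<tau> x) \<theta>) \<in> borel_measurable M"
  unfolding payoff_def by measurable

lemma pr_meas: assumes [measurable]: "\<tau> \<in> borel_measurable M" shows "(\<lambda>x. pr a (\<tau> x) \<theta>) \<in> borel_measurable M"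
  unfolding pr_def by measurable


lemma pr_diff_nonneg: "\<theta>1 < \<theta>' \<Longrightarrow> 0 \<le> pr a b \<theta>1 - pr a b \<theta>' + (\<theta>' - \<theta>1)"
  unfolding pr_def by auto

lemma pr_diff_zero: "\<theta>1 < \<theta>' \<Longrightarrow> pr a b \<theta>1 - pr a b \<theta>' + (\<theta>' - \<theta>1) = 0 \<Longrightarrow> b < ereal a"
  unfolding pr_def by (auto split: if_splits)

lemma pr_bound: "0 \<le> b \<Longrightarrow> 0 \<le> a \<Longrightarrow> norm (pr a b \<theta>) \<le> \<bar>\<theta>\<bar> + a"
  unfolding pr_def by (cases b) auto

lemma K:
  assumes P: "prob_space M" and S: "sets M = sets borel" and AET: "AE x in M. x \<in> \<Theta>"
    and st: "strategy \<Theta> \<tau>" and br: "best_response M \<Theta> \<sigma> \<tau>"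
    and t1: "\<theta>1 \<in> \<Theta>" and s1: "\<sigma> \<theta>1 = \<infinity>"
  shows "AE x in M. \<tau> x \<noteq> \<infinity>"
    and "\<theta>' \<in> \<Theta> \<Longrightarrow> \<theta>1 < \<theta>' \<Longrightarrow> \<sigma> \<theta>' \<noteq> \<infinity> \<Longrightarrow> 0 \<le> \<sigma> \<theta>' \<Longrightarrow> AE x in M. \<tau> x < \<sigma> \<theta>'"
proof -
  interpret prob_space M by fact
  have mt[measurable]: "\<tau> \<in> borel_measurable M"
    using st unfolding strategy_def by (simp add: measurable_cong_sets[OF S refl])
  have AE0: "AE x in M. 0 \<le> \<tau> x" using AET by eventually_elim (use st in \<open>auto simp: strategy_def\<close>)
  have intpr: "integrable M (\<lambda>x. pr a (\<tau> x) \<theta>)" if "0 \<le> a" for a \<theta>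
  proof (rule integrable_const_bound[where B="\<bar>\<theta>\<bar> + a"])
    show "AE x in M. norm (pr a (\<tau> x) \<theta>) \<le> \<bar>\<theta>\<bar> + a"
      using AE0 by eventually_elim (use that pr_bound in auto)
    show "(\<lambda>x. pr a (\<tau> x) \<theta>) \<in> borel_measurable M" by (rule pr_meas) (rule mt)
  qed
  have Ufin: "exp_payoff M \<tau> (ereal a) \<theta> = ereal (\<integral>x. pr a (\<tau> x) \<theta> \<partial>M)" if "0 \<le> a" for a \<theta>
    unfolding exp_payoff_def
  proof (rule ev_real)
    show "AE x in M. payoff (ereal a) (\<tau> x) \<theta> = ereal (pr a (\<tau> x) \<theta>)"
      using AE0 by eventually_elim (simp add: payoff_fin)
  qed (use intpr that in auto)
  have br1: "exp_payoff M \<tau> a \<theta>1 \<le> exp_payoff M \<tau> \<infinity> \<theta>1" if "0 \<le> a" for a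
    using br t1 s1 that unfolding best_response_def by metis
  have ninf: "exp_payoff M \<tau> \<infinity> \<theta>1 \<noteq> -\<infinity>"
    using br1[of "ereal 0"] Ufin[of 0 \<theta>1] by auto
  have pos: "(\<integral>\<^sup>+ x. e2ennreal (payoff \<infinity> (\<tau> x) \<theta>1) \<partial>M) \<noteq> \<infinity>"
  proof -
    have "(\<integral>\<^sup>+ x. e2ennreal (payoff \<infinity> (\<tau> x) \<theta>1) \<partial>M) \<le> (\<integral>\<^sup>+ x. ennreal \<bar>\<theta>1\<bar> \<partial>M)"
    proof (rule nn_integral_mono_AE)
      show "AE x in M. e2ennreal (payoff \<infinity> (\<tau> x) \<theta>1) \<le> ennreal \<bar>\<theta>1\<bar>"
        using AE0
      proof eventually_elim
        case (elim x)
        then show ?case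
          by (cases "\<tau> x") (auto simp: payoff_def e2ennreal_ereal e2ennreal_neg intro!: ennreal_leI)
      qed
    qed
    also have "\<dots> < \<infinity>" by (simp add: emeasure_space_1)
    finally show ?thesis by simp
  qed
  have pm: "(\<lambda>x. payoff \<infinity> (\<tau> x) \<theta>1) \<in> borel_measurable M" by (rule payoff_meas) (rule mt)
  have fin1: "AE x in M. payoff \<infinity> (\<tau> x) \<theta>1 \<noteq> \<infinity> \<and> payoff \<infinity> (\<tau> x) \<theta>1 \<noteq> -\<infinity>"
    and int1: "integrable M (\<lambda>x. real_of_ereal (payoff \<infinity> (\<tau> x) \<theta>1))"
    using ev_fin[OF pm pos] ninf unfolding exp_payoff_def by auto
  show K1: "AE x in M. \<tau> x \<noteq> \<infinity>"
    using fin1 by eventually_elim (auto simp: payoff_inf_inf)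
  have intt: "integrable M (\<lambda>x. real_of_ereal (\<tau> x))"
  proof (rule integrable_cong_AE_imp)
    show "integrable M (\<lambda>x. \<theta>1 - real_of_ereal (payoff \<infinity> (\<tau> x) \<theta>1))"
      using int1 by simp
    show "(\<lambda>x. real_of_ereal (\<tau> x)) \<in> borel_measurable M" by measurable
    show "AE x in M. \<theta>1 - real_of_ereal (payoff \<infinity> (\<tau> x) \<theta>1) = real_of_ereal (\<tau> x)"
      using K1 AE0 by eventually_elim (simp add: payoff_inf)
  qed
  have Uinf: "exp_payoff M \<tau> \<infinity> \<theta> = ereal (\<theta> - (\<integral>x. real_of_ereal (\<tau> x) \<partial>M))" for \<theta>
  proof -
    have "exp_payoff M \<tau> \<infinity> \<theta> = ereal (\<integral>x. \<theta> - real_of_ereal (\<tau> x) \<partial>M)"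
      unfolding exp_payoff_def
    proof (rule ev_real)
      show "AE x in M. payoff \<infinity> (\<tau> x) \<theta> = ereal (\<theta> - real_of_ereal (\<tau> x))"
        using K1 AE0 by eventually_elim (simp add: payoff_inf)
    qed (use intt in auto)
    also have "(\<integral>x. \<theta> - real_of_ereal (\<tau> x) \<partial>M) = \<theta> - (\<integral>x. real_of_ereal (\<tau> x) \<partial>M)"
      using intt by (simp add: prob_space)
    finally show ?thesis .
  qed
  assume t': "\<theta>' \<in> \<Theta>" "\<theta>1 < \<theta>'" "\<sigma> \<theta>' \<noteq> \<infinity>" "0 \<le> \<sigma> \<theta>'"
  then obtain a where A: "\<sigma> \<theta>' = ereal a" "0 \<le> a" by (cases "\<sigma> \<theta>'") auto
  have i1: "exp_payoff M \<tau> (ereal a) \<theta>1 \<le> exp_payoff M \<tau> \<infinity> \<theta>1" using br1 A by simp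
  have i2: "exp_payoff M \<tau> \<infinity> \<theta>' \<le> exp_payoff M \<tau> (ereal a) \<theta>'"
    using br t' A unfolding best_response_def by (metis ereal_less_eq(1))
  define I1 where "I1 = (\<integral>x. pr a (\<tau> x) \<theta>1 \<partial>M)"
  define I2 where "I2 = (\<integral>x. pr a (\<tau> x) \<theta>' \<partial>M)"
  define E where "E = (\<integral>x. real_of_ereal (\<tau> x) \<partial>M)"
  have r1: "I1 \<le> \<theta>1 - E" using i1 Ufin[OF A(2)] Uinf unfolding I1_def E_def by simp
  have r2: "\<theta>' - E \<le> I2" using i2 Ufin[OF A(2)] Uinf unfolding I2_def E_def by simp
  define d where "d x = pr a (\<tau> x) \<theta>1 - pr a (\<tau> x) \<theta>' + (\<theta>' - \<theta>1)" for x
  have intd: "integrable M d" unfolding d_def using intpr A(2) by auto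
  have "(\<integral>x. d x \<partial>M) = I1 - I2 + (\<theta>' - \<theta>1)"
    unfolding d_def I1_def I2_def using intpr[OF A(2)] by (simp add: prob_space)
  also have "\<dots> \<le> 0" using r1 r2 by simp
  finally have "(\<integral>x. d x \<partial>M) \<le> 0" .
  moreover have dnn: "AE x in M. 0 \<le> d x" unfolding d_def using pr_diff_nonneg t'(2) by auto
  moreover have "0 \<le> (\<integral>x. d x \<partial>M)" using dnn by (simp add: integral_nonneg_AE)
  ultimately have "(\<integral>x. d x \<partial>M) = 0" by simp
  then have "AE x in M. d x = 0" using integral_nonneg_eq_0_iff_AE[OF intd dnn] by simp
  then show "AE x in M. \<tau> x < \<sigma> \<theta>'"
    by eventually_elim (use pr_diff_zero t'(2) A in \<open>auto simp: d_def\<close>)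
qed


lemma stop_le: "stop_thresh lo hi \<sigma> \<le> hi"
proof (cases "{\<theta>\<in>typeset lo hi. \<sigma> \<theta> = \<infinity>} = {}")
  case False
  then obtain t where t: "t \<in> typeset lo hi" "\<sigma> t = \<infinity>" by auto
  then have "Inf (ereal ` {\<theta>\<in>typeset lo hi. \<sigma> \<theta> = \<infinity>}) \<le> ereal t"
    by (intro Inf_lower) auto
  also have "\<dots> < hi" using t by (simp add: typeset_def)
  finally show ?thesis using False by (simp add: stop_thresh_def)
qed (simp add: stop_thresh_def)

lemma le_eps: "(\<forall>n. y < ereal (m + 1 / real (Suc n))) \<Longrightarrow> y \<le> ereal m"
proof (rule ccontr)
  assume H: "\<forall>n. y < ereal (m + 1 / real (Suc n))" "\<not> y \<le> ereal m"
  show False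
  proof (cases y)
    case (real r)
    with H have "0 < r - m" by simp
    then obtain n where "inverse (real (Suc n)) < r - m" using reals_Archimedean by blast
    with H(1)[rule_format, of n] real show False by (simp add: field_simps)
  qed (use H in auto)
qed

lemma typeset_open: "open (typeset lo hi)"
proof (cases hi)
  case (real r)
  then have "typeset lo hi = {lo<..<r}" by (auto simp: typeset_def)
  then show ?thesis by simp
next
  case PInf
  then have "typeset lo hi = {lo<..}" by (auto simp: typeset_def)
  then show ?thesis by simp
next
  case MInf
  then have "typeset lo hi = {}" by (auto simp: typeset_def)
  then show ?thesis by simp
qed


theorem lemma4:
  fixes lo :: real and hi :: ereal and f :: "real \<Rightarrow> real"
    and \<sigma>1 \<sigma>2 :: "real \<Rightarrow> ereal"
  assumes "0 \<le> lo" and "ereal lo < hi"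
    and "continuous_on (typeset lo hi) f"
    and "\<forall>\<theta>\<in>typeset lo hi. 0 < f \<theta>"
    and "(\<integral>\<^sup>+ x. ennreal (f x) * indicator (typeset lo hi) x \<partial>lborel) = 1"
    and "bayes_nash f lo hi \<sigma>1 \<sigma>2"
  shows "max (stop_thresh lo hi \<sigma>1) (stop_thresh lo hi \<sigma>2) = hi"
proof -
  define \<Theta> where "\<Theta> = typeset lo hi"
  define M where "M = prior f lo hi"
  define g where "g x = ennreal (f x) * indicator \<Theta> x" for x
  have Mg: "M = density lborel g" unfolding M_def g_def prior_def \<Theta>_def ..
  have opn: "open \<Theta>" unfolding \<Theta>_def by (rule typeset_open)
  have gm: "g \<in> borel_measurable lborel"
  proof -
    have m1: "(\<lambda>x. indicator \<Theta> x *\<^sub>R f x) \<in> borel_measurable borel"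
      using opn assms(3) unfolding \<Theta>_def by (intro borel_measurable_continuous_on_indicator) auto
    have "g = (\<lambda>x. ennreal (indicator \<Theta> x *\<^sub>R f x))"
      by (auto simp: g_def fun_eq_iff indicator_def)
    then show ?thesis using m1 by simp
  qed
  have S: "sets M = sets borel" unfolding Mg by simp
  have P: "prob_space M"
  proof (rule prob_spaceI)
    have "emeasure M (space M) = (\<integral>\<^sup>+ x. g x * indicator (space M) x \<partial>lborel)"
      unfolding Mg using gm by (subst emeasure_density) auto
    also have "\<dots> = 1" using assms(5) unfolding Mg g_def \<Theta>_def by simp
    finally show "emeasure M (space M) = 1" .
  qed
  have AET: "AE x in M. x \<in> \<Theta>"
    unfolding Mg using gm by (subst AE_density) (auto simp: g_def indicator_def)
  have Ex: "\<exists>x. t < x \<and> ereal x < hi \<and> Q x" if t: "t \<in> \<Theta>" and Q: "AE x in M. Q x" for t Q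
  proof (rule ccontr)
    assume "\<not> ?thesis"
    then have "AE x in M. \<not> (t < x \<and> ereal x < hi)" using Q by (auto elim: AE_mp)
    then have "AE x in lborel. 0 < g x \<longrightarrow> \<not> (t < x \<and> ereal x < hi)"
      unfolding Mg using gm by (subst (asm) AE_density) auto
    moreover have gp: "0 < g x" if "t < x" "ereal x < hi" for x
    proof -
      have "x \<in> \<Theta>" using t that by (auto simp: \<Theta>_def typeset_def)
      then show ?thesis using assms(4) by (auto simp: g_def \<Theta>_def)
    qed
    ultimately have B: "AE x in lborel. \<not> (t < x \<and> ereal x < hi)"
      by (metis (mono_tags, lifting) AE_mp AE_I2)
    have A: "AE x in lborel. x \<notin> {t<..<c}" if hc: "ereal c < hi" for c
      using B
    proof eventually_elim
      case (elim x)
      show ?case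
      proof
        assume "x \<in> {t<..<c}"
        then have "t < x" "ereal x < ereal c" by auto
        then have "ereal x < hi" using hc by (meson order.strict_trans)
        with elim \<open>t < x\<close> show False by simp
      qed
    qed
    obtain c where c: "ereal t < ereal c" "ereal c < hi"
      using t ereal_dense2[of "ereal t" hi] by (auto simp: \<Theta>_def typeset_def)
    have "emeasure lborel {t<..<c} = 0"
      using A[OF c(2)] by (subst (asm) AE_iff_measurable[where N="{t<..<c}"]) auto
    moreover have "emeasure lborel {t<..<c} = ennreal (c - t)" using c by simp
    ultimately show False using c by simp
  qed
  have st1: "strategy \<Theta> \<sigma>1" and st2: "strategy \<Theta> \<sigma>2"
    and br1: "best_response M \<Theta> \<sigma>1 \<sigma>2" and br2: "best_response M \<Theta> \<sigma>2 \<sigma>1"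
    using assms(6) unfolding bayes_nash_def \<Theta>_def M_def by auto
  have notboth: False if t1: "\<theta>1 \<in> \<Theta>" "\<sigma>1 \<theta>1 = \<infinity>" and t2: "\<theta>2 \<in> \<Theta>" "\<sigma>2 \<theta>2 = \<infinity>" for \<theta>1 \<theta>2
  proof -
    note Ka = K[OF P S AET st2 br1 t1]
    note Kb = K[OF P S AET st1 br2 t2]
    have in\<Theta>: "x \<in> \<Theta>" if "t \<in> \<Theta>" "t < x" "ereal x < hi" for t x
      using that by (auto simp: \<Theta>_def typeset_def)
    define T1 where "T1 = {\<theta>. \<theta>1 < \<theta> \<and> ereal \<theta> < hi \<and> \<sigma>1 \<theta> \<noteq> \<infinity>}"
    define m where "m = Inf (\<sigma>1 ` T1)"
    have T1ne: "T1 \<noteq> {}" using Ex[OF t1(1) Kb(1)] by (auto simp: T1_def)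
    have T1pos: "0 \<le> \<sigma>1 s" if "s \<in> T1" for s
      using that st1 in\<Theta>[OF t1(1)] by (auto simp: T1_def strategy_def)
    have "0 \<le> m" unfolding m_def using T1pos by (auto intro: Inf_greatest)
    moreover have "m < \<infinity>"
    proof -
      obtain s where "s \<in> T1" using T1ne by auto
      then have "m \<le> \<sigma>1 s" unfolding m_def by (auto intro: Inf_lower)
      then show ?thesis using \<open>s \<in> T1\<close> by (auto simp: T1_def less_top[symmetric] top_unique)
    qed
    ultimately obtain m0 where m0: "m = ereal m0" by (cases m) auto
    have "AE x in M. \<sigma>2 x < ereal (m0 + 1 / real (Suc n))" for n
    proof -
      have "m < ereal (m0 + 1 / real (Suc n))" using m0 by simp
      then obtain s where s: "s \<in> T1" "\<sigma>1 s < ereal (m0 + 1 / real (Suc n))"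
        unfolding m_def by (auto simp: Inf_less_iff)
      have "AE x in M. \<sigma>2 x < \<sigma>1 s"
        using s(1) in\<Theta>[OF t1(1)] T1pos[OF s(1)] by (intro Ka(2)) (auto simp: T1_def)
      then show ?thesis by eventually_elim (use s(2) in \<open>auto intro: order.strict_trans\<close>)
    qed
    then have "AE x in M. \<forall>n. \<sigma>2 x < ereal (m0 + 1 / real (Suc n))" by (simp add: AE_all_countable)
    then have "AE x in M. \<sigma>2 x \<le> m" unfolding m0 by eventually_elim (rule le_eps)
    then have "AE x in M. \<sigma>2 x \<le> m \<and> \<sigma>2 x \<noteq> \<infinity>" using Ka(1) by eventually_elim auto
    from Ex[OF t2(1) this] obtain t where t: "\<theta>2 < t" "ereal t < hi" "\<sigma>2 t \<le> m" "\<sigma>2 t \<noteq> \<infinity>" by auto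
    have "AE x in M. \<sigma>1 x < \<sigma>2 t"
      using t in\<Theta>[OF t2(1)] st2 by (intro Kb(2)) (auto simp: strategy_def)
    then have "AE x in M. \<sigma>1 x < m \<and> \<sigma>1 x \<noteq> \<infinity>" using Kb(1)
      by eventually_elim (use t(3) in \<open>auto intro: order.strict_trans2\<close>)
    from Ex[OF t1(1) this] obtain s where s: "\<theta>1 < s" "ereal s < hi" "\<sigma>1 s < m" "\<sigma>1 s \<noteq> \<infinity>" by auto
    then have "s \<in> T1" by (simp add: T1_def)
    then have "m \<le> \<sigma>1 s" unfolding m_def by (auto intro: Inf_lower)
    then show False using s(3) by simp
  qed
  show ?thesis
  proof (cases "{\<theta>\<in>typeset lo hi. \<sigma>1 \<theta> = \<infinity>} = {}")
    case True
    then show ?thesis using stop_le[of lo hi \<sigma>2] by (simp add: stop_thresh_def max_def)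
  next
    case False
    then obtain \<theta>1 where "\<theta>1 \<in> \<Theta>" "\<sigma>1 \<theta>1 = \<infinity>" by (auto simp: \<Theta>_def)
    with notboth have "{\<theta>\<in>typeset lo hi. \<sigma>2 \<theta> = \<infinity>} = {}" by (auto simp: \<Theta>_def)
    then show ?thesis using stop_le[of lo hi \<sigma>1] by (simp add: stop_thresh_def max_def)
  qed
qed

end
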